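(* Let $X$ be a fake weighted projective space with weights $(\lambda_0,\lambda_1,\ldots,\lambda_n)$ and associated $n$-simplex $P$. Then $$\mathrm{mult}\,P\leq\frac{|N\cap P^\circ|\,h^{n-1}}{\lambda_1\lambda_2\cdots\lambda_n},\qquad\text{where }h:=\sum_{i=0}^n\lambda_i,$$ and $P^\circ$ denotes the interior of $P$.
   Context: Let $N\cong\mathbb{Z}^n$ be a lattice and $N_\mathbb{R}:=N\otimes_\mathbb{Z}\mathbb{R}$. Let $\rho_0,\ldots,\rho_n\in N$ be primitive lattice points with $N_\mathbb{R}=\sum_{i=0}^n\mathbb{R}_{\geq0}\rho_i$. There are positive integers $\lambda_0,\ldots,\lambda_n$ with $\gcd\{\lambda_0,\ldots,\lambda_n\}=1$ such that $\sum_{i=0}^n\lambda_i\rho_i=0$. The cones $\sigma_i$ generated by $\{\rho_j: j\neq i\}$ generate a complete simplicial fan; the associated projective toric variety $X$ is called a fake weighted projective space with weights $(\lambda_0,\ldots,\lambda_n)$ (indexed consistently with the $\rho_i$), and $P:=\mathrm{conv}\{\rho_0,\ldots,\rho_n\}$ is its associated simplex. The multiplicity is $\mathrm{mult}\,P:=[N:\mathbb{Z}\rho_0+\cdots+\mathbb{Z}\rho_n]$. *)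

theory Defs
  imports "HOL-Analysis.Analysis"
begin

definition lattice_pts :: "(real ^ 'n) set" where
  "lattice_pts = {x. \<forall>j. x $ j \<in> \<int>}"

definition primitive_pt :: "real ^ 'n \<Rightarrow> bool" where
  "primitive_pt v \<longleftrightarrow> v \<in> lattice_pts \<and> v \<noteq> 0 \<and>
     (\<forall>w \<in> lattice_pts. \<forall>m::int. v = of_int m *\<^sub>R w \<longrightarrow> \<bar>m\<bar> = 1)"

definition int_span :: "(nat \<Rightarrow> real ^ 'n) \<Rightarrow> nat \<Rightarrow> (real ^ 'n) set" where
  "int_span rho n = {\<Sum>i\<in>{0..n}. of_int (c i) *\<^sub>R rho i | c :: nat \<Rightarrow> int. True}"

text \<open>Multiplicity: the index [N : Z rho_0 + ... + Z rho_n], i.e. the number of cosets.\<close>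
definition mult_simplex :: "(nat \<Rightarrow> real ^ 'n) \<Rightarrow> nat \<Rightarrow> nat" where
  "mult_simplex rho n = card (lattice_pts //
     {(x, y). x \<in> lattice_pts \<and> y \<in> lattice_pts \<and> x - y \<in> int_span rho n})"

end

theory Submission
  imports Defs
begin



lemma lat_add: "x \<in> lattice_pts \<Longrightarrow> y \<in> lattice_pts \<Longrightarrow> x + y \<in> (lattice_pts :: (real^'n) set)"
  by (auto simp: lattice_pts_def)
lemma lat_diff: "x \<in> lattice_pts \<Longrightarrow> y \<in> lattice_pts \<Longrightarrow> x - y \<in> (lattice_pts :: (real^'n) set)"
  by (auto simp: lattice_pts_def)
lemma lat_zero: "0 \<in> (lattice_pts :: (real^'n) set)"
  by (auto simp: lattice_pts_def)
lemma lat_scale: "x \<in> lattice_pts \<Longrightarrow> (of_int m) *\<^sub>R x \<in> (lattice_pts :: (real^'n) set)"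
  by (auto simp: lattice_pts_def)
lemma lat_scale_nat: "x \<in> lattice_pts \<Longrightarrow> (real m) *\<^sub>R x \<in> (lattice_pts :: (real^'n) set)"
  using lat_scale[of x "int m"] by simp
lemma lat_sum: "finite S \<Longrightarrow> (\<And>i. i \<in> S \<Longrightarrow> f i \<in> lattice_pts) \<Longrightarrow> sum f S \<in> (lattice_pts :: (real^'n) set)"
  by (induction S rule: finite_induct) (auto intro: lat_add lat_zero)

lemma lat_bounded_finite:
  assumes "bounded (S :: (real^'n) set)"
  shows "finite (lattice_pts \<inter> S)"
proof -
  obtain r where r: "\<And>x. x \<in> S \<Longrightarrow> norm x \<le> r" using assms bounded_iff by blast
  define R where "R = \<lceil>r\<rceil>"
  have "lattice_pts \<inter> S \<subseteq> (\<lambda>f. \<chi> j. real_of_int (f j)) ` {f. \<forall>x. (x \<in> UNIV \<longrightarrow> f x \<in> {-R..R}) \<and> (x \<notin> UNIV \<longrightarrow> f x = 0)}"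
  proof
    fix x assume x: "x \<in> lattice_pts \<inter> S"
    then have int: "\<And>j. x $ j \<in> \<int>" by (auto simp: lattice_pts_def)
    define f where "f j = \<lfloor>x $ j\<rfloor>" for j
    have fx: "real_of_int (f j) = x $ j" for j using int[of j] unfolding f_def
      by (metis Ints_cases floor_of_int)
    have xS: "x \<in> S" using x by auto
    have "\<bar>x $ j\<bar> \<le> r" for j using component_le_norm_cart[of x j] r[of x] xS by linarith
    have "f j \<in> {-R..R}" for j
    proof -
      have a: "\<bar>real_of_int (f j)\<bar> \<le> r" using fx \<open>\<bar>x $ j\<bar> \<le> r\<close> by simp
      have b: "r \<le> real_of_int R" unfolding R_def by (rule le_of_int_ceiling)
      have "\<bar>real_of_int (f j)\<bar> \<le> real_of_int R" using a b by linarith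
      then have "\<bar>f j\<bar> \<le> R" by linarith
      then show ?thesis by auto
    qed
    moreover have "x = (\<chi> j. real_of_int (f j))" by (simp add: vec_eq_iff fx)
    ultimately show "x \<in> (\<lambda>f. \<chi> j. real_of_int (f j)) ` {f. \<forall>x. (x \<in> UNIV \<longrightarrow> f x \<in> {-R..R}) \<and> (x \<notin> UNIV \<longrightarrow> f x = 0)}"
      by auto
  qed
  moreover have "finite {f :: 'n \<Rightarrow> int. \<forall>x. (x \<in> UNIV \<longrightarrow> f x \<in> {-R..R}) \<and> (x \<notin> UNIV \<longrightarrow> f x = 0)}"
    by (rule finite_set_of_finite_funs) auto
  ultimately show ?thesis by (meson finite_imageI finite_subset)
qed




locale fwps =
  fixes rho :: "nat \<Rightarrow> real ^ 'n"
    and lam :: "nat \<Rightarrow> nat"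
    and n :: nat
  assumes n_def: "n = CARD('n)"
    and prim: "\<And>i. i \<in> {0..n} \<Longrightarrow> primitive_pt (rho i)"
    and span: "\<And>x :: real ^ 'n. \<exists>a :: nat \<Rightarrow> real.
                  (\<forall>i\<in>{0..n}. a i \<ge> 0) \<and> x = (\<Sum>i\<in>{0..n}. a i *\<^sub>R rho i)"
    and lam_pos: "\<And>i. i \<in> {0..n} \<Longrightarrow> lam i > 0"
    and lam_gcd: "Gcd (lam ` {0..n}) = 1"
    and relation: "(\<Sum>i\<in>{0..n}. real (lam i) *\<^sub>R rho i) = 0"
begin

definition "h = (\<Sum>i\<in>{0..n}. lam i)"
definition "v i = rho i - rho 0"
definition "u i = real (lam i) / real h"

lemma n_pos: "n \<ge> 1" using n_def by (simp add: Suc_leI)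

lemma split0: "{0..n} = insert 0 {1..n}" "0 \<notin> {1..n}" by auto

lemma h_eq: "h = lam 0 + (\<Sum>i\<in>{1..n}. lam i)"
  unfolding h_def by (simp add: split0)

lemma h_pos: "h > 0" using h_eq lam_pos[of 0] by simp

lemma rho_lat: "i \<in> {0..n} \<Longrightarrow> rho i \<in> lattice_pts"
  using prim primitive_pt_def by blast

lemma v_lat: "i \<in> {0..n} \<Longrightarrow> v i \<in> lattice_pts"
  unfolding v_def by (rule lat_diff) (auto intro: rho_lat)

lemma rho0_eq: "rho 0 = (\<Sum>i\<in>{1..n}. (- u i) *\<^sub>R v i)"
proof -
  have "0 = (\<Sum>i\<in>{0..n}. real (lam i) *\<^sub>R rho i)" using relation by simp
  also have "\<dots> = real (lam 0) *\<^sub>R rho 0 + (\<Sum>i\<in>{1..n}. real (lam i) *\<^sub>R (v i + rho 0))"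
    by (simp add: split0 v_def)
  also have "\<dots> = real h *\<^sub>R rho 0 + (\<Sum>i\<in>{1..n}. real (lam i) *\<^sub>R v i)"
    by (simp add: h_eq scaleR_add_right sum.distrib scaleR_add_left algebra_simps scaleR_sum_left)
  finally have "real h *\<^sub>R rho 0 = - (\<Sum>i\<in>{1..n}. real (lam i) *\<^sub>R v i)"
    by (simp add: eq_neg_iff_add_eq_0)
  then have "rho 0 = (1 / real h) *\<^sub>R (- (\<Sum>i\<in>{1..n}. real (lam i) *\<^sub>R v i))"
    using h_pos by (metis less_numeral_extra(3) of_nat_0_less_iff scaleR_scaleR
        nonzero_divide_eq_eq divide_self_if mult.commute scaleR_one times_divide_eq_left)
  also have "\<dots> = (\<Sum>i\<in>{1..n}. (- u i) *\<^sub>R v i)"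
    by (simp add: u_def scaleR_sum_right sum_negf[symmetric] divide_inverse mult.commute)
  finally show ?thesis .
qed

lemma v_spans: "\<exists>a. x = (\<Sum>i\<in>{1..n}. a i *\<^sub>R v i)"
proof -
  obtain a where a: "x = (\<Sum>i\<in>{0..n}. a i *\<^sub>R rho i)" using span by blast
  define A where "A = (\<Sum>i\<in>{0..n}. a i)"
  have "x = a 0 *\<^sub>R rho 0 + (\<Sum>i\<in>{1..n}. a i *\<^sub>R (v i + rho 0))"
    using a by (simp add: split0 v_def)
  also have "\<dots> = (\<Sum>i\<in>{1..n}. a i *\<^sub>R v i) + A *\<^sub>R rho 0"
    by (simp add: A_def split0 scaleR_add_right sum.distrib scaleR_sum_left algebra_simps)
  also have "\<dots> = (\<Sum>i\<in>{1..n}. (a i - A * u i) *\<^sub>R v i)"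
    by (simp add: rho0_eq scaleR_sum_right scaleR_diff_left sum_subtractf sum_negf)
  finally show ?thesis by (rule exI[where x="\<lambda>i. a i - A * u i"])
qed

lemma V_indep: "independent (v ` {1..n})" and card_V: "card (v ` {1..n}) = n"
proof -
  have sp: "UNIV \<subseteq> span (v ` {1..n})"
  proof
    fix x :: "real^'n"
    obtain a where "x = (\<Sum>i\<in>{1..n}. a i *\<^sub>R v i)" using v_spans by blast
    then show "x \<in> span (v ` {1..n})"
      apply simp
      apply (rule span_sum)
      apply (rule span_scale)
      apply (rule span_base)
      by auto
  qed
  have "card (v ` {1..n}) \<le> n" using card_image_le[of "{1..n}" v] by simp
  then show ind: "independent (v ` {1..n})"
    by (intro card_le_dim_spanning[OF _ sp]) (auto simp: n_def)
  have "dim (v ` {1..n}) = card (v ` {1..n})" using dim_eq_card_independent[OF ind] .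
  moreover have "dim (v ` {1..n}) = n"
    by (metis dim_UNIV dim_span sp subset_antisym subset_UNIV DIM_cart DIM_real n_def mult_1_right)
  ultimately show "card (v ` {1..n}) = n" by simp
qed

lemma v_inj: "inj_on v {1..n}"
  by (rule eq_card_imp_inj_on) (use card_V in simp_all)

lemma v_unique0:
  assumes "(\<Sum>i\<in>{1..n}. d i *\<^sub>R v i) = 0" "i \<in> {1..n}"
  shows "d i = 0"
proof -
  define c where "c w = d (inv_into {1..n} v w)" for w
  have "(\<Sum>w\<in>v ` {1..n}. c w *\<^sub>R w) = (\<Sum>i\<in>{1..n}. c (v i) *\<^sub>R v i)"
    by (rule sum.reindex[OF v_inj, unfolded comp_def])
  also have "\<dots> = (\<Sum>i\<in>{1..n}. d i *\<^sub>R v i)"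
    by (rule sum.cong[OF refl]) (metis c_def inv_into_f_f v_inj)
  finally have "(\<Sum>w\<in>v ` {1..n}. c w *\<^sub>R w) = 0" using assms(1) by simp
  then have "c (v i) = 0" using V_indep assms(2) unfolding independent_explicit by blast
  then show ?thesis using inv_into_f_f[OF v_inj assms(2)] by (simp add: c_def)
qed

lemma v_unique:
  assumes "(\<Sum>i\<in>{1..n}. a i *\<^sub>R v i) = (\<Sum>i\<in>{1..n}. b i *\<^sub>R v i)" "i \<in> {1..n}"
  shows "a i = b i"
proof -
  have "(\<Sum>i\<in>{1..n}. (a i - b i) *\<^sub>R v i) = 0"
    using assms(1) by (simp add: scaleR_diff_left sum_subtractf)
  from v_unique0[OF this assms(2)] show ?thesis by simp
qed

definition "coord p = (SOME a. p = (\<Sum>i\<in>{1..n}. a i *\<^sub>R v i))"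

lemma coord_repr: "p = (\<Sum>i\<in>{1..n}. coord p i *\<^sub>R v i)"
proof -
  have "\<exists>a. p = (\<Sum>i\<in>{1..n}. a i *\<^sub>R v i)" by (rule v_spans)
  from someI_ex[OF this] show ?thesis unfolding coord_def .
qed

lemma coord_eq:
  assumes "p = (\<Sum>i\<in>{1..n}. a i *\<^sub>R v i)" "i \<in> {1..n}"
  shows "coord p i = a i"
proof -
  have e: "(\<Sum>i\<in>{1..n}. coord p i *\<^sub>R v i) = (\<Sum>i\<in>{1..n}. a i *\<^sub>R v i)"
    using coord_repr[of p] assms(1) by (rule subst)
  show ?thesis by (rule v_unique[OF e assms(2)])
qed

end


context fwps begin

lemma coord_add: "i \<in> {1..n} \<Longrightarrow> coord (p + q) i = coord p i + coord q i"
proof -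
  assume i: "i \<in> {1..n}"
  have "p + q = (\<Sum>i\<in>{1..n}. (coord p i + coord q i) *\<^sub>R v i)"
    by (subst coord_repr[of p], subst coord_repr[of q]) (simp add: scaleR_add_left sum.distrib)
  from coord_eq[OF this i] show ?thesis .
qed

lemma coord_scale: "i \<in> {1..n} \<Longrightarrow> coord (r *\<^sub>R p) i = r * coord p i"
proof -
  assume i: "i \<in> {1..n}"
  have "r *\<^sub>R p = (\<Sum>i\<in>{1..n}. (r * coord p i) *\<^sub>R v i)"
    by (subst coord_repr[of p]) (simp add: scaleR_sum_right)
  from coord_eq[OF this i] show ?thesis .
qed

lemma coord_diff: "i \<in> {1..n} \<Longrightarrow> coord (p - q) i = coord p i - coord q i"
  using coord_add[of i q "p - q"] by simp

lemma coord_lin: "i \<in> {1..n} \<Longrightarrow> linear (\<lambda>p. coord p i)"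
  by (rule linearI) (simp_all add: coord_add coord_scale)

lemma coord_sum_lin: "linear (\<lambda>p. \<Sum>i\<in>{1..n}. coord p i)"
  by (rule linearI) (simp_all add: coord_add coord_scale sum.distrib sum_distrib_left)

lemma coord_cont: "i \<in> {1..n} \<Longrightarrow> continuous_on UNIV (\<lambda>p. coord p i)"
  using coord_lin linear_conv_bounded_linear linear_continuous_on by blast

lemma coord_sum_cont: "continuous_on UNIV (\<lambda>p. \<Sum>i\<in>{1..n}. coord p i)"
  using coord_sum_lin linear_conv_bounded_linear linear_continuous_on by blast

lemma sum_u: "(\<Sum>i\<in>{0..n}. u i) = 1"
proof -
  have "(\<Sum>i\<in>{0..n}. u i) = real (\<Sum>i\<in>{0..n}. lam i) / real h"
    unfolding u_def by (simp add: sum_divide_distrib)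
  also have "\<dots> = 1" using h_pos lam_pos[of 0] by (auto simp add: h_def simp del: of_nat_sum)
  finally show ?thesis .
qed

lemma u_pos: "i \<in> {0..n} \<Longrightarrow> u i > 0"
  using lam_pos h_pos by (simp add: u_def)

lemma in_hull:
  assumes "\<And>i. i \<in> {1..n} \<Longrightarrow> coord z i > - u i" "(\<Sum>i\<in>{1..n}. coord z i) < u 0"
  shows "z \<in> convex hull (rho ` {0..n})"
proof -
  define mu where "mu i = (if i = 0 then u 0 - (\<Sum>i\<in>{1..n}. coord z i) else coord z i + u i)" for i
  have mu0: "mu 0 = u 0 - (\<Sum>i\<in>{1..n}. coord z i)" by (simp add: mu_def)
  have mui: "mu i = coord z i + u i" if "i \<in> {1..n}" for i using that by (simp add: mu_def)
  have s1: "(\<Sum>i\<in>{0..n}. mu i) = 1"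
  proof -
    have "(\<Sum>i\<in>{0..n}. mu i) = mu 0 + (\<Sum>i\<in>{1..n}. mu i)" by (simp add: split0)
    also have "\<dots> = u 0 + (\<Sum>i\<in>{1..n}. u i)" by (simp add: mu0 mui sum.distrib)
    also have "\<dots> = (\<Sum>i\<in>{0..n}. u i)" by (simp add: split0)
    finally show ?thesis using sum_u by simp
  qed
  have pos: "mu i \<ge> 0" if "i \<in> {0..n}" for i
  proof (cases "i = 0")
    case True then show ?thesis using assms(2) by (simp add: mu0)
  next
    case False then have "i \<in> {1..n}" using that by auto
    then show ?thesis using assms(1)[of i] by (simp add: mui)
  qed
  have su: "(\<Sum>i\<in>{1..n}. u i) = 1 - u 0" using sum_u by (simp add: split0)
  have "(\<Sum>i\<in>{0..n}. mu i *\<^sub>R rho i) = mu 0 *\<^sub>R rho 0 + (\<Sum>i\<in>{1..n}. mu i *\<^sub>R (v i + rho 0))"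
    by (simp add: split0 v_def)
  also have "\<dots> = mu 0 *\<^sub>R rho 0 + (\<Sum>i\<in>{1..n}. (coord z i + u i) *\<^sub>R v i) + (\<Sum>i\<in>{1..n}. mu i) *\<^sub>R rho 0"
  proof -
    have "(\<Sum>i\<in>{1..n}. mu i *\<^sub>R (v i + rho 0)) = (\<Sum>i\<in>{1..n}. (coord z i + u i) *\<^sub>R v i) + (\<Sum>i\<in>{1..n}. mu i *\<^sub>R rho 0)"
      by (simp add: scaleR_add_right sum.distrib mui)
    also have "(\<Sum>i\<in>{1..n}. mu i *\<^sub>R rho 0) = (\<Sum>i\<in>{1..n}. mu i) *\<^sub>R rho 0"
      by (rule scaleR_sum_left[symmetric])
    finally show ?thesis by simp
  qed
  also have "(\<Sum>i\<in>{1..n}. mu i) = (\<Sum>i\<in>{1..n}. coord z i) + (1 - u 0)"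
    using su by (simp add: mui sum.distrib)
  also have "(\<Sum>i\<in>{1..n}. (coord z i + u i) *\<^sub>R v i) = z + (\<Sum>i\<in>{1..n}. u i *\<^sub>R v i)"
    by (subst (2) coord_repr[of z]) (simp add: scaleR_add_left sum.distrib)
  also have "(\<Sum>i\<in>{1..n}. u i *\<^sub>R v i) = - rho 0"
    by (simp add: rho0_eq sum_negf)
  finally have "(\<Sum>i\<in>{0..n}. mu i *\<^sub>R rho i) = z"
    by (simp add: mu0 algebra_simps)
  moreover have "(\<Sum>i\<in>{0..n}. mu i *\<^sub>R rho i) \<in> convex hull (rho ` {0..n})"
    by (rule convex_sum) (auto simp: s1 pos convex_convex_hull hull_inc)
  ultimately show ?thesis by simp
qed

lemma in_interior:
  assumes "\<And>i. i \<in> {1..n} \<Longrightarrow> coord z i > - u i" "(\<Sum>i\<in>{1..n}. coord z i) < u 0"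
  shows "z \<in> interior (convex hull (rho ` {0..n}))"
proof -
  define U where "U = (\<Inter>i\<in>{1..n}. {p. - u i < coord p i}) \<inter> {p. (\<Sum>i\<in>{1..n}. coord p i) < u 0}"
  have "open U" unfolding U_def
    by (intro open_Int open_INT ballI open_Collect_less coord_cont coord_sum_cont continuous_on_const) auto
  moreover have "U \<subseteq> convex hull (rho ` {0..n})"
    unfolding U_def by (auto intro!: in_hull)
  moreover have "z \<in> U" using assms unfolding U_def by auto
  ultimately show ?thesis using interior_maximal by blast
qed

end


context fwps begin

abbreviation "NS \<equiv> int_span rho n"

lemma is_intro: "x = (\<Sum>i\<in>{0..n}. of_int (c i) *\<^sub>R rho i) \<Longrightarrow> x \<in> NS"
  unfolding int_span_def by blast

lemma is_add: "x \<in> NS \<Longrightarrow> y \<in> NS \<Longrightarrow> x + y \<in> NS"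
proof -
  assume "x \<in> NS" "y \<in> NS"
  then obtain c d where "x = (\<Sum>i\<in>{0..n}. of_int (c i) *\<^sub>R rho i)" "y = (\<Sum>i\<in>{0..n}. of_int (d i) *\<^sub>R rho i)"
    unfolding int_span_def by blast
  then have "x + y = (\<Sum>i\<in>{0..n}. of_int ((\<lambda>i. c i + d i) i) *\<^sub>R rho i)"
    by (simp add: scaleR_add_left sum.distrib)
  then show ?thesis by (rule is_intro)
qed

lemma is_scale: "x \<in> NS \<Longrightarrow> of_int m *\<^sub>R x \<in> NS"
proof -
  assume "x \<in> NS"
  then obtain c where "x = (\<Sum>i\<in>{0..n}. of_int (c i) *\<^sub>R rho i)"
    unfolding int_span_def by blast
  then have "of_int m *\<^sub>R x = (\<Sum>i\<in>{0..n}. of_int ((\<lambda>i. m * c i) i) *\<^sub>R rho i)"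
    by (simp add: scaleR_sum_right)
  then show ?thesis by (rule is_intro)
qed

lemma is_zero: "0 \<in> NS"
  using is_scale[of _ 0] unfolding int_span_def by auto

lemma is_neg: "x \<in> NS \<Longrightarrow> - x \<in> NS"
  using is_scale[of x "-1"] by simp

lemma is_diff: "x \<in> NS \<Longrightarrow> y \<in> NS \<Longrightarrow> x - y \<in> NS"
  using is_add[of x "- y"] is_neg by simp

lemma is_rho: "j \<in> {0..n} \<Longrightarrow> rho j \<in> NS"
proof -
  assume j: "j \<in> {0..n}"
  have "(\<Sum>i\<in>{0..n}. of_int ((\<lambda>i. if i = j then 1 else 0) i) *\<^sub>R rho i) = (\<Sum>i\<in>{0..n}. if i = j then rho i else 0)"
    by (rule sum.cong) auto
  also have "\<dots> = rho j" using j by (simp add: sum.delta)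
  finally show ?thesis by (metis is_intro)
qed

lemma is_v: "j \<in> {1..n} \<Longrightarrow> v j \<in> NS"
  unfolding v_def by (rule is_diff) (auto intro: is_rho)

lemma is_sum: "finite S \<Longrightarrow> (\<And>i. i \<in> S \<Longrightarrow> f i \<in> NS) \<Longrightarrow> sum f S \<in> NS"
  by (induction S rule: finite_induct) (auto intro: is_add is_zero)

definition "rel = {(x, y). x \<in> lattice_pts \<and> y \<in> lattice_pts \<and> x - y \<in> NS}"

lemma rel_equiv: "equiv lattice_pts rel"
proof (rule equivI)
  show "rel \<subseteq> lattice_pts \<times> lattice_pts" by (auto simp: rel_def)
  show "refl_on lattice_pts rel" by (auto simp: rel_def refl_on_def is_zero)
  show "sym rel" unfolding rel_def sym_def using is_neg by fastforce
  show "trans rel" unfolding rel_def trans_def using is_add by fastforce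
qed

lemma mult_eq: "mult_simplex rho n = card (lattice_pts // rel)"
  unfolding mult_simplex_def rel_def by simp

definition "mm p i = \<lceil>coord p i / real (lam i)\<rceil> - 1"
definition "red p = p - (\<Sum>i\<in>{1..n}. (of_int (mm p i) * real (lam i)) *\<^sub>R v i)"

lemma coord_red: "i \<in> {1..n} \<Longrightarrow> coord (red p) i = coord p i - of_int (mm p i) * real (lam i)"
proof -
  assume i: "i \<in> {1..n}"
  have "red p = (\<Sum>i\<in>{1..n}. (coord p i - of_int (mm p i) * real (lam i)) *\<^sub>R v i)"
    unfolding red_def by (subst (1) coord_repr[of p]) (simp add: scaleR_diff_left sum_subtractf)
  from coord_eq[OF this i] show ?thesis .
qed

lemma coord_red_bounds:
  assumes i: "i \<in> {1..n}"
  shows "0 < coord (red p) i" "coord (red p) i \<le> real (lam i)"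
proof -
  have l: "real (lam i) > 0" using lam_pos i by auto
  define x where "x = coord p i / real (lam i)"
  have cp: "coord p i = x * real (lam i)" using l by (simp add: x_def)
  have e: "coord (red p) i = (x - of_int (\<lceil>x\<rceil> - 1)) * real (lam i)"
    by (simp add: coord_red[OF i] mm_def x_def[symmetric] cp algebra_simps)
  have a: "0 < x - of_int (\<lceil>x\<rceil> - 1)" "x - of_int (\<lceil>x\<rceil> - 1) \<le> 1"
    using ceiling_correct[of x] by auto
  show "0 < coord (red p) i" using e a l by simp
  show "coord (red p) i \<le> real (lam i)" using e a l by (simp add: mult_le_cancel_right1)
qed

lemma red_ns: "p - red p \<in> NS"
proof -
  have "p - red p = (\<Sum>i\<in>{1..n}. of_int (mm p i * int (lam i)) *\<^sub>R v i)"
    by (simp add: red_def)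
  also have "\<dots> \<in> NS" by (intro is_sum is_scale is_v) auto
  finally show ?thesis .
qed

lemma ns_lat: "x \<in> NS \<Longrightarrow> x \<in> lattice_pts"
proof -
  assume "x \<in> NS"
  then obtain c where "x = (\<Sum>i\<in>{0..n}. of_int (c i) *\<^sub>R rho i)"
    unfolding int_span_def by blast
  also have "\<dots> \<in> lattice_pts" by (intro lat_sum lat_scale rho_lat) auto
  finally show ?thesis .
qed

lemma red_lat: "p \<in> lattice_pts \<Longrightarrow> red p \<in> lattice_pts"
  using lat_diff[OF _ ns_lat[OF red_ns], of p p] by simp

end


context fwps begin

definition "rep X = (SOME x. x \<in> X)"
definition "pre X j k = rep X + real j *\<^sub>R rho 0 + (\<Sum>i\<in>{1..n}. real (k i) *\<^sub>R v i)"
definition "pt X j k = red (pre X j k)"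
definition "Kset = PiE {1..n} (\<lambda>i. {0..<lam i})"
abbreviation "Cls \<equiv> lattice_pts // rel"

lemma rep_in: "X \<in> Cls \<Longrightarrow> rep X \<in> X"
  unfolding rep_def using in_quotient_imp_non_empty[OF rel_equiv] by (simp add: some_in_eq)

lemma rep_lat: "X \<in> Cls \<Longrightarrow> rep X \<in> lattice_pts"
  using rep_in in_quotient_imp_subset[OF rel_equiv] by blast

lemma coord_pre: "i \<in> {1..n} \<Longrightarrow> coord (pre X j k) i = coord (rep X) i - real j * u i + real (k i)"
proof -
  assume i: "i \<in> {1..n}"
  have "pre X j k = (\<Sum>i\<in>{1..n}. (coord (rep X) i - real j * u i + real (k i)) *\<^sub>R v i)"
    unfolding pre_def
    by (subst (1) coord_repr[of "rep X"])
       (simp add: rho0_eq scaleR_sum_right scaleR_add_left scaleR_diff_left sum.distrib sum_subtractf sum_negf algebra_simps)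
  from coord_eq[OF this i] show ?thesis .
qed

lemma pre_ns: "pre X j k - rep X \<in> NS"
proof -
  have "pre X j k - rep X = of_int (int j) *\<^sub>R rho 0 + (\<Sum>i\<in>{1..n}. of_int (int (k i)) *\<^sub>R v i)"
    by (simp add: pre_def)
  also have "\<dots> \<in> NS" by (intro is_add is_scale is_rho is_sum is_v) auto
  finally show ?thesis .
qed

lemma pt_ns: "pt X j k - rep X \<in> NS"
proof -
  have "pt X j k - rep X = (pre X j k - rep X) - (pre X j k - red (pre X j k))"
    by (simp add: pt_def)
  then show ?thesis using is_diff pre_ns red_ns by metis
qed

lemma pt_lat: "X \<in> Cls \<Longrightarrow> pt X j k \<in> lattice_pts"
proof -
  assume X: "X \<in> Cls"
  have "pt X j k = rep X + (pt X j k - rep X)" by simp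
  also have "\<dots> \<in> lattice_pts" using rep_lat[OF X] ns_lat[OF pt_ns] by (rule lat_add)
  finally show ?thesis .
qed

lemma coord_pt: "i \<in> {1..n} \<Longrightarrow> coord (pt X j k) i =
   coord (rep X) i - real j * u i + real (k i) - of_int (mm (pre X j k) i) * real (lam i)"
  unfolding pt_def by (simp add: coord_red coord_pre)

lemma small_dvd:
  assumes "(b::int) dvd a" "\<bar>a\<bar> < b" shows "a = 0"
proof (rule ccontr)
  assume a: "a \<noteq> 0"
  obtain c where c: "a = b * c" using assms(1) by blast
  have "c \<noteq> 0" using a c by auto
  then have "1 \<le> \<bar>c\<bar>" by linarith
  moreover have bp: "b > 0" using assms(2) by linarith
  ultimately have "b \<le> b * \<bar>c\<bar>" by (simp add: mult_le_cancel_left1)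
  then show False using assms(2) c bp by (simp add: abs_mult)
qed

lemma pt_inj:
  assumes X: "X \<in> Cls" and X': "X' \<in> Cls" and j: "j < h" and j': "j' < h"
    and k: "k \<in> Kset" and k': "k' \<in> Kset"
    and eq: "pt X j k = pt X' j' k'"
  shows "X = X' \<and> j = j' \<and> k = k'"
proof -
  have "rep X - rep X' = (pt X' j' k' - rep X') - (pt X j k - rep X)" using eq by simp
  then have "rep X - rep X' \<in> NS" using is_diff pt_ns by metis
  then have "(rep X, rep X') \<in> rel" using rep_lat X X' by (simp add: rel_def)
  then have XX: "X = X'" using quotient_eq_iff[OF rel_equiv X X' rep_in[OF X] rep_in[OF X']] by simp
  define z where "z i = int (k' i) - int (k i) + (mm (pre X j k) i - mm (pre X j' k') i) * int (lam i)" for i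
  have ci: "(real j' - real j) * u i = of_int (z i)" if i: "i \<in> {1..n}" for i
    using coord_pt[OF i, of X j k] coord_pt[OF i, of X' j' k'] eq XX
    by (simp add: z_def algebra_simps)
  have hz: "(int j' - int j) * int (lam i) = int h * z i" if i: "i \<in> {1..n}" for i
  proof -
    have "real_of_int ((int j' - int j) * int (lam i)) = real h * ((real j' - real j) * u i)"
      using h_pos by (simp add: u_def)
    also have "\<dots> = real_of_int (int h * z i)" using ci[OF i] by simp
    finally show ?thesis by linarith
  qed
  have dv: "int h dvd (int j' - int j) * int (lam i)" if i: "i \<in> {0..n}" for i
  proof (cases "i = 0")
    case False then show ?thesis using hz[of i] i by simp
  next
    case True
    have A: "(int j' - int j) * int (lam 0) = (int j' - int j) * int h - (\<Sum>i\<in>{1..n}. (int j' - int j) * int (lam i))"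
      by (simp add: h_eq sum_distrib_left algebra_simps)
    have B: "(\<Sum>i\<in>{1..n}. (int j' - int j) * int (lam i)) = (\<Sum>i\<in>{1..n}. int h * z i)"
      by (rule sum.cong) (simp_all add: hz)
    have C: "(\<Sum>i\<in>{1..n}. int h * z i) = int h * (\<Sum>i\<in>{1..n}. z i)"
      by (rule sum_distrib_left[symmetric])
    have D: "(int j' - int j) * int (lam 0) = int h * ((int j' - int j) - (\<Sum>i\<in>{1..n}. z i))"
      unfolding A B C by (simp add: right_diff_distrib mult.commute)
    show ?thesis using True D by simp
  qed
  define d where "d = nat \<bar>int j' - int j\<bar>"
  have "h dvd d * lam i" if "i \<in> {0..n}" for i
  proof -
    have "int (d * lam i) = \<bar>(int j' - int j) * int (lam i)\<bar>" by (simp add: d_def abs_mult)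
    then have "int h dvd int (d * lam i)" using dv[OF that] by simp
    then show ?thesis by (simp only: int_dvd_int_iff)
  qed
  then have "h dvd Gcd ((*) d ` lam ` {0..n})" by (auto intro: Gcd_greatest)
  then have "h dvd d" by (simp add: Gcd_mult lam_gcd)
  moreover have "d < h" using j j' unfolding d_def by auto
  ultimately have "d = 0" using nat_dvd_not_less by (metis gr0I)
  then have jj: "j = j'" unfolding d_def by simp
  have kk: "k i = k' i" if i: "i \<in> {1..n}" for i
  proof -
    have "int (lam i) dvd (int (k' i) - int (k i))"
    proof -
      have "int h * z i = 0" using hz[OF i] jj by simp
      then have "z i = 0" using h_pos by simp
      then have "int (k' i) - int (k i) = - ((mm (pre X j k) i - mm (pre X j' k') i) * int (lam i))"
        unfolding z_def by linarith
      then show ?thesis by simp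
    qed
    moreover have "\<bar>int (k' i) - int (k i)\<bar> < int (lam i)"
    proof -
      have "k i < lam i" "k' i < lam i" using k k' i unfolding Kset_def by (auto simp: PiE_iff)
      then show ?thesis by (simp add: abs_less_iff)
    qed
    ultimately show ?thesis using small_dvd by fastforce
  qed
  have "k = k'" using k k' kk unfolding Kset_def by (rule PiE_ext)
  with XX jj show ?thesis by simp
qed

end


context fwps begin

definition "bidx q = restrict (\<lambda>i. nat (\<lceil>coord q i / u i\<rceil> - 1)) {1..n}"
definition "Bset = PiE {1..n} (\<lambda>_. {0..<h})"
definition "Dset = Cls \<times> ({0..<h} \<times> Kset)"
definition "ptd d = pt (fst d) (fst (snd d)) (snd (snd d))"
abbreviation "Ifin \<equiv> lattice_pts \<inter> interior (convex hull (rho ` {0..n}))"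

lemma Ifin_finite: "finite Ifin"
proof -
  have "bounded (convex hull (rho ` {0..n}))"
    by (intro compact_imp_bounded finite_imp_compact_convex_hull) auto
  then have "bounded (interior (convex hull (rho ` {0..n})))"
    using bounded_subset interior_subset by blast
  then show ?thesis by (rule lat_bounded_finite)
qed

lemma coord_pt_pos: "i \<in> {1..n} \<Longrightarrow> 0 < coord (pt X j k) i"
  unfolding pt_def by (rule coord_red_bounds)

lemma coord_pt_le: "i \<in> {1..n} \<Longrightarrow> coord (pt X j k) i \<le> real (lam i)"
  unfolding pt_def by (rule coord_red_bounds)

lemma bidx_in: "bidx (pt X j k) \<in> Bset"
proof -
  have "nat (\<lceil>coord (pt X j k) i / u i\<rceil> - 1) < h" if i: "i \<in> {1..n}" for i
  proof -
    have up: "u i > 0" by (rule u_pos) (use i in auto)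
    have "coord (pt X j k) i / u i \<le> real (lam i) / u i"
      using coord_pt_le[OF i] up by (simp add: divide_right_mono)
    also have "\<dots> = real h" using up h_pos lam_pos[of i] i by (simp add: u_def)
    finally have "\<lceil>coord (pt X j k) i / u i\<rceil> \<le> int h"
      by (simp add: ceiling_le_iff)
    moreover have "0 < coord (pt X j k) i / u i" using coord_pt_pos[OF i] up by simp
    ultimately show ?thesis by linarith
  qed
  then show ?thesis unfolding bidx_def Bset_def by (auto simp: PiE_iff)
qed

lemma box_diff:
  assumes i: "i \<in> {1..n}" and p: "0 < coord p i" and q: "0 < coord q i" and b: "bidx p = bidx q"
  shows "coord p i - coord q i > - u i"
proof -
  have up: "u i > 0" by (rule u_pos) (use i in auto)
  define x where "x = coord p i / u i"
  define y where "y = coord q i / u i"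
  have x0: "x > 0" "y > 0" using p q up by (auto simp: x_def y_def)
  have "nat (\<lceil>x\<rceil> - 1) = nat (\<lceil>y\<rceil> - 1)"
    using fun_cong[OF b, of i] i by (simp add: bidx_def x_def y_def)
  moreover have "\<lceil>x\<rceil> \<ge> 1" "\<lceil>y\<rceil> \<ge> 1" using x0 by (auto simp: one_le_ceiling)
  ultimately have "\<lceil>x\<rceil> = \<lceil>y\<rceil>" by linarith
  then have "x - y > -1" using ceiling_correct[of x] ceiling_correct[of y] by linarith
  then have "(x - y + 1) * u i > 0" using up by (intro mult_pos_pos) auto
  then have "(x - y) * u i > - u i" by (simp add: algebra_simps)
  then show ?thesis using up by (simp add: x_def y_def algebra_simps)
qed

lemma ptd_inj: "inj_on ptd Dset"
proof (rule inj_onI)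
  fix d d' assume d: "d \<in> Dset" and d': "d' \<in> Dset" and e: "ptd d = ptd d'"
  obtain X j k where dd: "d = (X, j, k)" by (cases d) auto
  obtain X' j' k' where dd': "d' = (X', j', k')" by (cases d') auto
  show "d = d'" using pt_inj[of X X' j j' k k'] d d' e unfolding dd dd' Dset_def ptd_def by auto
qed

lemma fiber_le:
  assumes fin: "finite Dset"
  shows "card {d \<in> Dset. bidx (ptd d) = b} \<le> card Ifin"
proof (cases "{d \<in> Dset. bidx (ptd d) = b} = {}")
  case True then show ?thesis by (metis card.empty zero_le)
next
  case False
  define Db where "Db = {d \<in> Dset. bidx (ptd d) = b}"
  define f where "f d = (\<Sum>i\<in>{1..n}. coord (ptd d) i)" for d
  have fDb: "finite Db" using fin by (simp add: Db_def)
  have ne: "f ` Db \<noteq> {}" using False by (simp add: Db_def)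
  have "Max (f ` Db) \<in> f ` Db" using fDb ne by (intro Max_in) auto
  then obtain ds where ds1: "ds \<in> Db" and ds2: "f ds = Max (f ` Db)" by (metis (no_types, lifting) imageE)
  have ds: "ds \<in> Db" "\<And>d. d \<in> Db \<Longrightarrow> f d \<le> f ds"
    using ds1 apply simp
    unfolding ds2 using fDb by (intro Max_ge) auto
  have "inj_on (\<lambda>d. ptd d - ptd ds) Db"
  proof (rule inj_onI)
    fix x y assume "x \<in> Db" "y \<in> Db" "ptd x - ptd ds = ptd y - ptd ds"
    then show "x = y" using inj_onD[OF ptd_inj] by (auto simp: Db_def)
  qed
  moreover have "(\<lambda>d. ptd d - ptd ds) ` Db \<subseteq> Ifin"
  proof
    fix z assume "z \<in> (\<lambda>d. ptd d - ptd ds) ` Db"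
    then obtain d where d: "d \<in> Db" and z: "z = ptd d - ptd ds" by blast
    have dD: "d \<in> Dset" "ds \<in> Dset" using d ds(1) by (auto simp: Db_def)
    have lat: "z \<in> lattice_pts" unfolding z ptd_def
      using dD by (intro lat_diff pt_lat) (auto simp: Dset_def)
    have "coord z i > - u i" if i: "i \<in> {1..n}" for i
    proof -
      have "bidx (ptd d) = bidx (ptd ds)" using d ds(1) by (simp add: Db_def)
      from box_diff[OF i _ _ this] show ?thesis
        unfolding z coord_diff[OF i] ptd_def by (simp add: coord_pt_pos[OF i])
    qed
    moreover have "(\<Sum>i\<in>{1..n}. coord z i) < u 0"
    proof -
      have "(\<Sum>i\<in>{1..n}. coord z i) = f d - f ds"
        unfolding z f_def by (simp add: coord_diff sum_subtractf)
      also have "\<dots> \<le> 0" using ds(2)[OF d] by simp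
      also have "\<dots> < u 0" using u_pos[of 0] by simp
      finally show ?thesis .
    qed
    ultimately have "z \<in> interior (convex hull (rho ` {0..n}))" by (rule in_interior)
    with lat show "z \<in> Ifin" by blast
  qed
  ultimately have "card Db \<le> card Ifin"
    using card_inj_on_le Ifin_finite by blast
  then show ?thesis by (simp add: Db_def)
qed

lemma count_bound:
  assumes fin: "finite Cls"
  shows "card Cls * (h * (\<Prod>i\<in>{1..n}. lam i)) \<le> h ^ n * card Ifin"
proof -
  have fK: "finite Kset" unfolding Kset_def by (intro finite_PiE) auto
  have fD: "finite Dset" unfolding Dset_def using fin fK by simp
  have cK: "card Kset = (\<Prod>i\<in>{1..n}. lam i)" unfolding Kset_def by (simp add: card_PiE)
  have cD: "card Dset = card Cls * (h * (\<Prod>i\<in>{1..n}. lam i))"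
    unfolding Dset_def by (simp add: card_cartesian_product cK)
  have fB: "finite Bset" unfolding Bset_def by (intro finite_PiE) auto
  have cB: "card Bset = h ^ n" unfolding Bset_def by (simp add: card_PiE)
  have sub: "Dset \<subseteq> (\<Union>b\<in>Bset. {d \<in> Dset. bidx (ptd d) = b})"
    using bidx_in unfolding ptd_def by blast
  have "card Dset \<le> card (\<Union>b\<in>Bset. {d \<in> Dset. bidx (ptd d) = b})"
    by (rule card_mono) (use fB fD sub in auto)
  also have "\<dots> \<le> (\<Sum>b\<in>Bset. card {d \<in> Dset. bidx (ptd d) = b})"
    by (rule card_UN_le[OF fB])
  also have "\<dots> \<le> (\<Sum>b\<in>Bset. card Ifin)"
    by (rule sum_mono) (rule fiber_le[OF fD])
  also have "\<dots> = h ^ n * card Ifin" using cB by simp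
  finally show ?thesis using cD by simp
qed

theorem main:
  "real (mult_simplex rho n)
           \<le> real (card (lattice_pts \<inter> interior (convex hull (rho ` {0..n}))))
               * real (\<Sum>i\<in>{0..n}. lam i) ^ (n - 1)
             / real (\<Prod>i\<in>{1..n}. lam i)"
proof -
  have P: "(\<Prod>i\<in>{1..n}. lam i) > 0" using lam_pos by (auto intro: prod_pos)
  have rhs0: "0 \<le> real (card Ifin) * real (\<Sum>i\<in>{0..n}. lam i) ^ (n - 1) / real (\<Prod>i\<in>{1..n}. lam i)"
    by (intro divide_nonneg_nonneg mult_nonneg_nonneg zero_le_power) (simp_all del: of_nat_sum of_nat_prod)
  show ?thesis
  proof (cases "finite Cls")
    case False
    then show ?thesis using rhs0 by (simp add: mult_eq del: of_nat_sum of_nat_prod)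
  next
    case True
    have hn: "h ^ n = h * h ^ (n - 1)" using n_pos by (cases n) auto
    have "card Cls * (\<Prod>i\<in>{1..n}. lam i) * h \<le> card Ifin * h ^ (n - 1) * h"
      using count_bound[OF True] hn by (simp add: algebra_simps)
    then have "card Cls * (\<Prod>i\<in>{1..n}. lam i) \<le> card Ifin * h ^ (n - 1)"
      using h_pos by simp
    then have "real (card Cls * (\<Prod>i\<in>{1..n}. lam i)) \<le> real (card Ifin * h ^ (n - 1))"
      by (simp only: of_nat_le_iff)
    then have "real (card Cls) * real (\<Prod>i\<in>{1..n}. lam i) \<le> real (card Ifin) * real h ^ (n - 1)"
      by (simp only: of_nat_mult of_nat_power)
    then show ?thesis using P
      by (simp add: mult_eq h_def pos_le_divide_eq del: of_nat_sum of_nat_prod)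
  qed
qed

end

theorem mainTheorem7:
  fixes rho :: "nat \<Rightarrow> real ^ 'n"
    and lam :: "nat \<Rightarrow> nat"
    and n :: nat
  assumes n_def: "n = CARD('n)"
    and prim: "\<And>i. i \<in> {0..n} \<Longrightarrow> primitive_pt (rho i)"
    and span: "\<And>x :: real ^ 'n. \<exists>a :: nat \<Rightarrow> real.
                  (\<forall>i\<in>{0..n}. a i \<ge> 0) \<and> x = (\<Sum>i\<in>{0..n}. a i *\<^sub>R rho i)"
    and lam_pos: "\<And>i. i \<in> {0..n} \<Longrightarrow> lam i > 0"
    and lam_gcd: "Gcd (lam ` {0..n}) = 1"
    and relation: "(\<Sum>i\<in>{0..n}. real (lam i) *\<^sub>R rho i) = 0"
  shows "real (mult_simplex rho n)
           \<le> real (card (lattice_pts \<inter> interior (convex hull (rho ` {0..n}))))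
               * real (\<Sum>i\<in>{0..n}. lam i) ^ (n - 1)
             / real (\<Prod>i\<in>{1..n}. lam i)"
  using fwps.main[OF fwps.intro[OF assms]] .

end
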